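(* Let $G=(V,E,\omega)$ be a weighted directed graph with $V=\{1,\dots,n\}$, let $\lambda_0\in\mathbb{C}$ be an eigenvalue of $M_G$ and let $u=(u_1,\dots,u_n)\in\mathbb{C}^n$ satisfy $M_G u=\lambda_0 u$, $u\neq 0$. Assume that $S=\{m+1,\dots,n\}$ is a $\lambda_0$-structural set of $G$. Then $\lambda_0$ is an eigenvalue of the reduced matrix $R_S(G,\lambda_0)$, and $R_S(G,\lambda_0)\,u_S=\lambda_0\,u_S$, where $u_S=(u_{m+1},\dots,u_n)$ is the restriction of $u$ to $S$.
   Context: Let $G=(V,E,\omega)$ be a weighted directed graph with vertex set $V=\{1,\dots,n\}$, edge set $E\subset V\times V$ and weight function $\omega:E\to\mathbb{C}$; set $\omega(i,j)=0$ whenever $(i,j)\notin E$. Its weighted adjacency matrix is $M_G=(\omega(i,j))_{i,j\in V}$ (acting on column vectors, so $(M_Gu)_i=\sum_j\omega(i,j)u_j$). A path is a sequence $(i_0,\dots,i_p)$ with $p\ge 1$ and $(i_\ell,i_{\ell+1})\in E$ for $0\le \ell\le p-1$, whose vertices are pairwise distinct except that possibly $i_0=i_p$; if $i_0=i_p$ the path is a cycle, and a cycle with $p=1$ is a loop. For $S\subset V$ write $\overline S=V\setminus S$. Given $\lambda\in\mathbb{C}$, a nonempty set $S\subset V$ is a $\lambda$-structural set of $G$ if (i) every cycle of $G$ that is not a loop contains a vertex of $S$, and (ii) $\omega(i,i)\neq\lambda$ for every $i\in\overline S$. A branch of $(G,S)$ is a path $\beta=(i_0,i_1,\dots,i_p)$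 whose interior vertices $i_1,\dots,i_{p-1}$ all lie in $\overline S$; $\mathscr B_{ij}$ denotes the set of branches with $i_0=i$ and $i_p=j$. The weight of a branch is $\omega(\beta,\lambda)=\omega(i_0,i_1)\prod_{\ell=1}^{p-1}\frac{\omega(i_\ell,i_{\ell+1})}{\lambda-\omega(i_\ell,i_\ell)}$. For $i,j\in S$ set $R_{ij}(G,S,\lambda)=\sum_{\beta\in\mathscr B_{ij}}\omega(\beta,\lambda)$; the reduced matrix $R_S(G,\lambda)$ is the $S\times S$ matrix with entries $R_{ij}(G,S,\lambda)$, $i,j\in S$. *)

theory Defs
  imports Complex_Main
begin

definition wgraph :: "nat \<Rightarrow> (nat \<times> nat) set \<Rightarrow> (nat \<Rightarrow> nat \<Rightarrow> complex) \<Rightarrow> bool" where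
  "wgraph n E w \<longleftrightarrow> E \<subseteq> {1..n} \<times> {1..n} \<and> (\<forall>i j. (i, j) \<notin> E \<longrightarrow> w i j = 0)"

definition is_path :: "(nat \<times> nat) set \<Rightarrow> nat list \<Rightarrow> bool" where
  "is_path E xs \<longleftrightarrow> length xs \<ge> 2 \<and>
     (\<forall>k. Suc k < length xs \<longrightarrow> (xs ! k, xs ! Suc k) \<in> E) \<and>
     distinct (butlast xs) \<and> distinct (tl xs)"

definition is_cycle :: "(nat \<times> nat) set \<Rightarrow> nat list \<Rightarrow> bool" where
  "is_cycle E xs \<longleftrightarrow> is_path E xs \<and> hd xs = last xs"

definition is_loop :: "(nat \<times> nat) set \<Rightarrow> nat list \<Rightarrow> bool" where
  "is_loop E xs \<longleftrightarrow> is_cycle E xs \<and> length xs = 2"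

definition structural_set ::
  "nat \<Rightarrow> (nat \<times> nat) set \<Rightarrow> (nat \<Rightarrow> nat \<Rightarrow> complex) \<Rightarrow> complex \<Rightarrow> nat set \<Rightarrow> bool" where
  "structural_set n E w lam S \<longleftrightarrow> S \<noteq> {} \<and> S \<subseteq> {1..n} \<and>
     (\<forall>xs. is_cycle E xs \<and> \<not> is_loop E xs \<longrightarrow> (\<exists>v\<in>set xs. v \<in> S)) \<and>
     (\<forall>i\<in>{1..n} - S. w i i \<noteq> lam)"

definition is_branch :: "(nat \<times> nat) set \<Rightarrow> nat set \<Rightarrow> nat list \<Rightarrow> bool" where
  "is_branch E S xs \<longleftrightarrow> is_path E xs \<and> (\<forall>k. 0 < k \<and> k < length xs - 1 \<longrightarrow> xs ! k \<notin> S)"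

definition branches :: "(nat \<times> nat) set \<Rightarrow> nat set \<Rightarrow> nat \<Rightarrow> nat \<Rightarrow> nat list set" where
  "branches E S i j = {xs. is_branch E S xs \<and> hd xs = i \<and> last xs = j}"

definition branch_weight :: "(nat \<Rightarrow> nat \<Rightarrow> complex) \<Rightarrow> complex \<Rightarrow> nat list \<Rightarrow> complex" where
  "branch_weight w lam xs = w (xs ! 0) (xs ! 1) *
     (\<Prod>l\<in>{1..<length xs - 1}. w (xs ! l) (xs ! Suc l) / (lam - w (xs ! l) (xs ! l)))"

definition reduced_entry ::
  "(nat \<times> nat) set \<Rightarrow> (nat \<Rightarrow> nat \<Rightarrow> complex) \<Rightarrow> nat set \<Rightarrow> complex \<Rightarrow> nat \<Rightarrow> nat \<Rightarrow> complex" where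
  "reduced_entry E w S lam i j = (\<Sum>xs\<in>branches E S i j. branch_weight w lam xs)"

end

theory Submission
  imports Defs
begin

locale ctx =
  fixes n m :: nat and E :: "(nat \<times> nat) set" and w :: "nat \<Rightarrow> nat \<Rightarrow> complex"
    and lam0 :: complex and u :: "nat \<Rightarrow> complex"
  assumes G: "wgraph n E w"
    and eig: "\<forall>i\<in>{1..n}. (\<Sum>j=1..n. w i j * u j) = lam0 * u i"
    and SS: "structural_set n E w lam0 {m+1..n}"
begin

abbreviation "S \<equiv> {m+1..n}"
abbreviation "T \<equiv> {1..m}"

lemma m_less: "m < n" using SS unfolding structural_set_def by auto

lemma ET: "(i,j) \<in> E \<Longrightarrow> i \<in> {1..n} \<and> j \<in> {1..n}" using G unfolding wgraph_def by auto
lemma w0: "(i,j) \<notin> E \<Longrightarrow> w i j = 0" using G unfolding wgraph_def by auto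

lemma dT: "t \<in> T \<Longrightarrow> lam0 - w t t \<noteq> 0" using SS m_less unfolding structural_set_def by auto

lemma cycS: "is_cycle E xs \<Longrightarrow> \<not> is_loop E xs \<Longrightarrow> \<exists>v\<in>set xs. v \<in> S"
  using SS unfolding structural_set_def by auto

definition edges :: "nat list \<Rightarrow> bool" where
  "edges q \<longleftrightarrow> (\<forall>k. Suc k < length q \<longrightarrow> (q!k, q!Suc k) \<in> E)"

lemma edges_snoc: "q \<noteq> [] \<Longrightarrow> edges q \<Longrightarrow> (last q, j) \<in> E \<Longrightarrow> edges (q @ [j])"
  unfolding edges_def
proof (intro allI impI)
  fix k assume a: "q \<noteq> []" "\<forall>k. Suc k < length q \<longrightarrow> (q!k, q!Suc k) \<in> E" "(last q, j) \<in> E" "Suc k < length (q@[j])"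
  show "((q@[j])!k, (q@[j])!Suc k) \<in> E"
  proof (cases "Suc k < length q")
    case True then show ?thesis using a by (simp add: nth_append)
  next
    case False then have "k = length q - 1" using a by simp
    then show ?thesis using a by (simp add: nth_append last_conv_nth)
  qed
qed

lemma edges_tl: "edges p \<Longrightarrow> edges (tl p)"
  unfolding edges_def by (simp add: nth_tl)

lemma cyc:
  assumes "q \<noteq> []" "set q \<subseteq> T" "distinct q" "edges q" "(last q, j) \<in> E" "j \<in> set q" "j \<noteq> last q"
  shows False
proof -
  obtain a where a: "a < length q" "q ! a = j" using assms(6) by (meson in_set_conv_nth)
  have al: "a \<noteq> length q - 1" using a assms(1,7) by (metis last_conv_nth)
  define c where "c = drop a q @ [j]"
  have lc: "length c = length q - a + 1" using a unfolding c_def by simp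
  have hd: "hd c = j" using a unfolding c_def by (simp add: hd_drop_conv_nth)
  have tlc: "tl c = drop (Suc a) q @ [j]" using a unfolding c_def by (simp add: drop_Suc tl_drop)
  have jn: "j \<notin> set (drop (Suc a) q)"
  proof
    assume j: "j \<in> set (drop (Suc a) q)"
    have "j \<in> set (take (Suc a) q)" using a by (auto simp: in_set_conv_nth intro!: exI[of _ a])
    moreover have "distinct (take (Suc a) q @ drop (Suc a) q)" using assms(3) by simp
    ultimately show False using j by (simp only: distinct_append) blast
  qed
  have ed: "\<forall>k. Suc k < length c \<longrightarrow> (c!k, c!Suc k) \<in> E"
  proof (intro allI impI)
    fix k assume k: "Suc k < length c"
    show "(c!k, c!Suc k) \<in> E"
    proof (cases "Suc k < length q - a")
      case True
      then have "c!k = q!(a+k)" "c!Suc k = q!(a + Suc k)" unfolding c_def by (auto simp: nth_append)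
      then show ?thesis using assms(4) True unfolding edges_def by auto
    next
      case False
      then have "k = length q - a - 1" using k lc by auto
      then have "c!k = last q" "c!Suc k = j" unfolding c_def using a assms(1)
        by (auto simp: nth_append last_conv_nth)
      then show ?thesis using assms(5) by simp
    qed
  qed
  have "is_cycle E c" unfolding is_cycle_def is_path_def
    using lc ed hd jn assms(3) a tlc by (auto simp: c_def)
  moreover have "\<not> is_loop E c" unfolding is_loop_def using lc al a by auto
  moreover have "set c \<subseteq> T" using assms(2,6) unfolding c_def
    by (auto dest: in_set_dropD)
  ultimately show False using cycS by fastforce
qed

definition vp :: "nat list \<Rightarrow> bool" where
  "vp p \<longleftrightarrow> p \<noteq> [] \<and> hd p \<in> S \<and> set (tl p) \<subseteq> T \<and> distinct p \<and> edges p"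

definition Ext :: "nat list \<Rightarrow> nat list set" where
  "Ext p = {xs. is_branch E S xs \<and> last xs \<in> S \<and> (\<exists>ys. ys \<noteq> [] \<and> xs = p @ ys)}"

lemma path_set: assumes "is_path E xs" shows "set xs \<subseteq> {1..n}"
proof
  fix x assume "x \<in> set xs"
  then obtain k where k: "k < length xs" "xs ! k = x" by (meson in_set_conv_nth)
  have l: "length xs \<ge> 2" using assms unfolding is_path_def by simp
  show "x \<in> {1..n}"
  proof (cases "Suc k < length xs")
    case True
    then have "(xs!k, xs!Suc k) \<in> E" using assms unfolding is_path_def by blast
    then show ?thesis using ET k by blast
  next
    case False
    then have "Suc (k - 1) < length xs" "Suc (k-1) = k" using l k by auto
    then have "(xs!(k-1), xs!k) \<in> E" using assms unfolding is_path_def by metis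
    then show ?thesis using ET k by blast
  qed
qed

lemma path_len: assumes "is_path E xs" shows "length xs \<le> Suc n"
proof -
  have "distinct (tl xs)" using assms unfolding is_path_def by simp
  then have "length (tl xs) = card (set (tl xs))" by (simp add: distinct_card)
  also have "\<dots> \<le> card {1..n}"
  proof (rule card_mono)
    have "set (tl xs) \<subseteq> set xs" by (cases xs) auto
    then show "set (tl xs) \<subseteq> {1..n}" using path_set[OF assms] by blast
  qed simp
  finally show ?thesis by simp
qed

lemma fin_Ext: "finite (Ext p)"
proof (rule finite_subset[OF _ finite_lists_length_le[of "{1..n}" "Suc n"]])
  show "Ext p \<subseteq> {xs. set xs \<subseteq> {1..n} \<and> length xs \<le> Suc n}"
    using path_set path_len unfolding Ext_def is_branch_def by blast
qed simp

lemma Ext_pos: assumes "xs \<in> Ext p" "p \<noteq> []"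
  shows "xs ! length p \<in> {1..n} \<and> (last p, xs ! length p) \<in> E"
proof -
  obtain ys where ys: "ys \<noteq> []" "xs = p @ ys" and pa: "is_path E xs" using assms(1) unfolding Ext_def is_branch_def by blast
  have "Suc (length p - 1) < length xs" "Suc (length p - 1) = length p" using ys assms(2) by auto
  then have "(xs!(length p - 1), xs!length p) \<in> E" using pa unfolding is_path_def by metis
  moreover have "xs!(length p - 1) = last p" using ys assms(2) by (simp add: nth_append last_conv_nth)
  ultimately show ?thesis using ET by auto
qed

lemma fib_T: assumes "j \<notin> S" shows "{xs \<in> Ext p. xs ! length p = j} = Ext (p @ [j])"
proof
  show "{xs \<in> Ext p. xs ! length p = j} \<subseteq> Ext (p @ [j])"
  proof
    fix xs assume "xs \<in> {xs \<in> Ext p. xs ! length p = j}"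
    then obtain ys where ys: "ys \<noteq> []" "xs = p @ ys" "xs ! length p = j" "is_branch E S xs" "last xs \<in> S"
      unfolding Ext_def by blast
    then obtain ys' where ys': "ys = j # ys'" by (cases ys) auto
    have "ys' \<noteq> []" using ys ys' assms by auto
    then show "xs \<in> Ext (p @ [j])" using ys ys' unfolding Ext_def by auto
  qed
next
  show "Ext (p @ [j]) \<subseteq> {xs \<in> Ext p. xs ! length p = j}"
    unfolding Ext_def by (auto simp: nth_append)
qed

lemma fib_S: assumes "vp p" "j \<in> S"
  shows "{xs \<in> Ext p. xs ! length p = j} = (if (last p, j) \<in> E then {p@[j]} else {})"
proof -
  have pn: "p \<noteq> []" using assms unfolding vp_def by simp
  have sub: "{xs \<in> Ext p. xs ! length p = j} \<subseteq> {p@[j]}"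
  proof
    fix xs assume "xs \<in> {xs \<in> Ext p. xs ! length p = j}"
    then obtain ys where ys: "ys \<noteq> []" "xs = p @ ys" "xs ! length p = j" "is_branch E S xs"
      unfolding Ext_def by blast
    then obtain ys' where ys': "ys = j # ys'" by (cases ys) auto
    have "ys' = []"
    proof (rule ccontr)
      assume "ys' \<noteq> []"
      then have "0 < length p \<and> length p < length xs - 1" using pn ys ys' by auto
      then have "xs ! length p \<notin> S" using ys(4) unfolding is_branch_def by blast
      then show False using ys assms by simp
    qed
    then show "xs \<in> {p@[j]}" using ys ys' by simp
  qed
  have ok: "p @ [j] \<in> Ext p" if e: "(last p, j) \<in> E"
  proof -
    have tT: "set (tl p) \<subseteq> T" and dp: "distinct p" and ep: "edges p" and hp: "hd p \<in> S"
      using assms unfolding vp_def by auto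
    have jt: "j \<notin> set (tl p)" using tT assms(2) by auto
    have tl: "tl (p @ [j]) = tl p @ [j]" using pn by simp
    have path: "is_path E (p @ [j])" unfolding is_path_def
      using edges_snoc[OF pn ep e] pn dp jt tl distinct_tl[OF dp]
      by (auto simp: edges_def Suc_le_eq)
    have int: "\<forall>k. 0 < k \<and> k < length (p@[j]) - 1 \<longrightarrow> (p@[j]) ! k \<notin> S"
    proof (intro allI impI)
      fix k assume k: "0 < k \<and> k < length (p@[j]) - 1"
      then have "(p@[j]) ! k = tl p ! (k - 1)" using pn by (cases p) (auto simp: nth_append nth_Cons')
      moreover have "tl p ! (k - 1) \<in> set (tl p)" using k pn by (auto intro!: nth_mem)
      ultimately show "(p@[j]) ! k \<notin> S" using tT by auto
    qed
    show ?thesis unfolding Ext_def is_branch_def using path int assms(2) by auto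
  qed
  show ?thesis
  proof (cases "(last p, j) \<in> E")
    case True
    then show ?thesis using sub ok by auto
  next
    case False
    then show ?thesis using sub Ext_pos pn by fastforce
  qed
qed

lemma F: assumes "vp p"
  shows "(\<Sum>xs\<in>Ext p. f xs) = (\<Sum>j\<in>{1..n}. if j \<in> S then (if (last p,j)\<in>E then f (p@[j]) else 0)
             else (\<Sum>xs\<in>Ext (p@[j]). f xs))"
proof -
  have pn: "p \<noteq> []" using assms unfolding vp_def by simp
  have "(\<Sum>xs\<in>Ext p. f xs) = (\<Sum>j\<in>{1..n}. \<Sum>xs\<in>{xs \<in> Ext p. xs ! length p = j}. f xs)"
    by (rule sum.group[symmetric]) (use fin_Ext Ext_pos pn in auto)
  also have "\<dots> = (\<Sum>j\<in>{1..n}. if j \<in> S then (if (last p,j)\<in>E then f (p@[j]) else 0)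
             else (\<Sum>xs\<in>Ext (p@[j]). f xs))"
    by (rule sum.cong) (auto simp: fib_S[OF assms] fib_T)
  finally show ?thesis .
qed

lemma bw_snoc: assumes "2 \<le> length p"
  shows "branch_weight w lam0 (p@[j]) = branch_weight w lam0 p * (w (last p) j / (lam0 - w (last p) (last p)))"
proof -
  define b where "b = length p - 1"
  have b: "length p = Suc b" "1 \<le> b" using assms unfolding b_def by auto
  have h01: "(p@[j])!0 = p!0" "(p@[j])!1 = p!1" using b by (auto simp: nth_append)
  have "(\<Prod>l\<in>{1..<length (p@[j]) - 1}. w ((p@[j]) ! l) ((p@[j]) ! Suc l) / (lam0 - w ((p@[j]) ! l) ((p@[j]) ! l)))
      = (\<Prod>l\<in>{1..<Suc b}. w ((p@[j]) ! l) ((p@[j]) ! Suc l) / (lam0 - w ((p@[j]) ! l) ((p@[j]) ! l)))"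
    using b by simp
  also have "\<dots> = (\<Prod>l\<in>{1..<b}. w ((p@[j]) ! l) ((p@[j]) ! Suc l) / (lam0 - w ((p@[j]) ! l) ((p@[j]) ! l)))
      * (w ((p@[j]) ! b) ((p@[j]) ! Suc b) / (lam0 - w ((p@[j]) ! b) ((p@[j]) ! b)))"
    using b by (simp add: prod.atLeastLessThan_Suc)
  also have "\<dots> = (\<Prod>l\<in>{1..<length p - 1}. w (p ! l) (p ! Suc l) / (lam0 - w (p ! l) (p ! l)))
      * (w (last p) j / (lam0 - w (last p) (last p)))"
  proof -
    have "(\<Prod>l\<in>{1..<b}. w ((p@[j]) ! l) ((p@[j]) ! Suc l) / (lam0 - w ((p@[j]) ! l) ((p@[j]) ! l)))
        = (\<Prod>l\<in>{1..<length p - 1}. w (p ! l) (p ! Suc l) / (lam0 - w (p ! l) (p ! l)))"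
      using b by (intro prod.cong) (auto simp: nth_append)
    moreover have "p \<noteq> []" using b by auto
    then have "(p@[j]) ! b = last p" "(p@[j]) ! Suc b = j" using b
      by (auto simp: nth_append last_conv_nth)
    ultimately show ?thesis by simp
  qed
  finally show ?thesis unfolding branch_weight_def using h01 by (simp add: mult.assoc)
qed

lemma bw2: "branch_weight w lam0 [i,j] = w i j"
  unfolding branch_weight_def by simp

lemma L: "vp p \<Longrightarrow> 2 \<le> length p \<Longrightarrow>
  branch_weight w lam0 p * u (last p) = (\<Sum>xs\<in>Ext p. branch_weight w lam0 xs * u (last xs))"
proof (induction "Suc (Suc m) - length p" arbitrary: p rule: less_induct)
  case less
  let ?f = "\<lambda>xs. branch_weight w lam0 xs * u (last xs)"
  let ?bw = "branch_weight w lam0"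
  define t where "t = last p"
  have pn: "p \<noteq> []" and tT: "set (tl p) \<subseteq> T" and dp: "distinct p" and ep: "edges p" and hp: "hd p \<in> S"
    using less.prems unfolding vp_def by auto
  have tln: "tl p \<noteq> []" using less.prems(2) by (cases p) auto
  have lt: "last (tl p) = t" using tln unfolding t_def by (simp add: last_tl)
  have tin: "t \<in> set (tl p)" using tln lt by (metis last_in_set)
  have tTT: "t \<in> T" using tin tT by auto
  have tn: "t \<in> {1..n}" using tTT m_less by auto
  have lenp: "length p \<le> Suc m"
  proof -
    have "length (tl p) = card (set (tl p))" using distinct_tl[OF dp] by (simp add: distinct_card)
    also have "\<dots> \<le> card T" using tT by (intro card_mono) auto
    finally show ?thesis by simp
  qed
  define d where "d = lam0 - w t t"
  have d: "d \<noteq> 0" using dT[OF tTT] unfolding d_def .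
  have e1: "(\<Sum>j\<in>{1..n}-{t}. w t j * u j) = d * u t"
  proof -
    have "(\<Sum>j=1..n. w t j * u j) = w t t * u t + (\<Sum>j\<in>{1..n}-{t}. w t j * u j)"
      using tn by (simp add: sum.remove)
    then show ?thesis using eig tn unfolding d_def by (simp add: algebra_simps)
  qed
  have lhs: "?bw p * u t = (\<Sum>j\<in>{1..n}-{t}. ?bw (p@[j]) * u j)"
  proof -
    have "(\<Sum>j\<in>{1..n}-{t}. ?bw (p@[j]) * u j) = (\<Sum>j\<in>{1..n}-{t}. (?bw p / d) * (w t j * u j))"
      using less.prems(2) by (intro sum.cong) (auto simp: bw_snoc t_def d_def)
    also have "\<dots> = (?bw p / d) * (\<Sum>j\<in>{1..n}-{t}. w t j * u j)" by (rule sum_distrib_left[symmetric])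
    also have "\<dots> = (?bw p / d) * (d * u t)" by (simp only: e1)
    also have "\<dots> = ?bw p * u t" using d by simp
    finally show ?thesis by simp
  qed
  define g where "g j = (if j \<in> S then (if (last p,j)\<in>E then ?f (p@[j]) else 0)
             else (\<Sum>xs\<in>Ext (p@[j]). ?f xs))" for j
  have rhs: "(\<Sum>xs\<in>Ext p. ?f xs) = (\<Sum>j\<in>{1..n}. g j)"
    unfolding g_def by (rule F[OF less.prems(1)])
  have gt: "g t = 0"
  proof -
    have "Ext (p@[t]) = {}"
    proof (rule ccontr)
      assume "Ext (p@[t]) \<noteq> {}"
      then obtain xs ys where "xs = p @ [t] @ ys" "is_branch E S xs" unfolding Ext_def by auto
      then have "distinct (tl p @ t # ys)" using pn unfolding is_branch_def is_path_def by simp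
      then show False using tin by simp
    qed
    then show ?thesis unfolding g_def using tTT by auto
  qed
  have gj: "g j = ?bw (p@[j]) * u j" if j: "j \<in> {1..n}-{t}" for j
  proof (cases "j \<in> S")
    case True
    then show ?thesis unfolding g_def using w0 less.prems(2) by (auto simp: bw_snoc t_def)
  next
    case False
    then have jT: "j \<in> T" using j by auto
    show ?thesis
    proof (cases "(t,j) \<in> E")
      case True
      have jp: "j \<notin> set p"
      proof
        assume "j \<in> set p"
        moreover have "j \<noteq> hd p" using hp False by auto
        ultimately have "j \<in> set (tl p)" using pn by (cases p) auto
        then show False using cyc[OF tln tT distinct_tl[OF dp] edges_tl[OF ep]] lt True j by auto
      qed
      have vpj: "vp (p@[j])" unfolding vp_def
        using pn hp tT jT dp jp edges_snoc[OF pn ep] True by (auto simp: t_def)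
      have "?bw (p@[j]) * u (last (p@[j])) = (\<Sum>xs\<in>Ext (p@[j]). ?f xs)"
        by (rule less.hyps) (use lenp vpj less.prems(2) in auto)
      then show ?thesis unfolding g_def using False by auto
    next
      case False': False
      have "Ext (p@[j]) = {}"
      proof (rule ccontr)
        assume "Ext (p@[j]) \<noteq> {}"
        then obtain xs where "xs \<in> {xs \<in> Ext p. xs ! length p = j}" using fib_T[OF False, of p] by auto
        then show False using Ext_pos[OF _ pn, of xs] False' by (auto simp: t_def)
      qed
      moreover have "?bw (p@[j]) = 0" using w0[OF False'] less.prems(2) by (simp add: bw_snoc t_def)
      ultimately show ?thesis unfolding g_def using False by simp
    qed
  qed
  have "(\<Sum>j\<in>{1..n}. g j) = g t + (\<Sum>j\<in>{1..n}-{t}. g j)" using tn by (simp add: sum.remove)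
  also have "\<dots> = (\<Sum>j\<in>{1..n}-{t}. ?bw (p@[j]) * u j)" using gt gj by simp
  finally show ?case using lhs rhs t_def by simp
qed

lemma red: assumes i: "i \<in> S"
  shows "(\<Sum>j=m+1..n. reduced_entry E w S lam0 i j * u j) = lam0 * u i"
proof -
  let ?f = "\<lambda>xs. branch_weight w lam0 xs * u (last xs)"
  have vpi: "vp [i]" unfolding vp_def edges_def using i by auto
  have fib: "{xs \<in> Ext [i]. last xs = j} = branches E S i j" if "j \<in> S" for j
  proof
    show "{xs \<in> Ext [i]. last xs = j} \<subseteq> branches E S i j" unfolding Ext_def branches_def by auto
    show "branches E S i j \<subseteq> {xs \<in> Ext [i]. last xs = j}"
    proof
      fix xs assume xs: "xs \<in> branches E S i j"
      then have "length xs \<ge> 2" unfolding branches_def is_branch_def is_path_def by auto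
      then have "xs = [i] @ tl xs" "tl xs \<noteq> []" using xs unfolding branches_def by (cases xs; auto)+
      then show "xs \<in> {xs \<in> Ext [i]. last xs = j}" using xs that unfolding branches_def Ext_def by blast
    qed
  qed
  have A: "(\<Sum>xs\<in>Ext [i]. ?f xs) = (\<Sum>j=m+1..n. reduced_entry E w S lam0 i j * u j)"
  proof -
    have "(\<Sum>xs\<in>Ext [i]. ?f xs) = (\<Sum>j\<in>S. \<Sum>xs\<in>{xs \<in> Ext [i]. last xs = j}. ?f xs)"
      by (rule sum.group[symmetric]) (auto simp: fin_Ext, auto simp: Ext_def)
    also have "\<dots> = (\<Sum>j\<in>S. \<Sum>xs\<in>branches E S i j. branch_weight w lam0 xs * u j)"
      by (rule sum.cong) (auto simp: fib branches_def)
    also have "\<dots> = (\<Sum>j=m+1..n. reduced_entry E w S lam0 i j * u j)"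
      unfolding reduced_entry_def by (simp add: sum_distrib_right)
    finally show ?thesis .
  qed
  have B: "(\<Sum>xs\<in>Ext [i]. ?f xs) = (\<Sum>j=1..n. w i j * u j)"
  proof -
    have "(\<Sum>xs\<in>Ext [i]. ?f xs) = (\<Sum>j\<in>{1..n}. if j \<in> S then (if (last [i],j)\<in>E then ?f ([i]@[j]) else 0)
             else (\<Sum>xs\<in>Ext ([i]@[j]). ?f xs))" by (rule F[OF vpi])
    also have "\<dots> = (\<Sum>j=1..n. w i j * u j)"
    proof (rule sum.cong)
      fix j assume j: "j \<in> {1..n}"
      show "(if j \<in> S then (if (last [i],j)\<in>E then ?f ([i]@[j]) else 0)
             else (\<Sum>xs\<in>Ext ([i]@[j]). ?f xs)) = w i j * u j"
      proof (cases "j \<in> S")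
        case True then show ?thesis using w0 by (auto simp: bw2)
      next
        case False
        show ?thesis
        proof (cases "(i,j) \<in> E")
          case True
          have "vp [i,j]" unfolding vp_def edges_def using i j False True
            by (auto simp: less_Suc_eq)
          then have "branch_weight w lam0 [i,j] * u (last [i,j]) = (\<Sum>xs\<in>Ext [i,j]. ?f xs)"
            by (intro L) auto
          then show ?thesis using False by (auto simp: bw2)
        next
          case False': False
          have "Ext [i,j] = {}"
          proof (rule ccontr)
            assume "Ext [i,j] \<noteq> {}"
            then obtain xs where "xs \<in> {xs \<in> Ext [i]. xs ! length [i] = j}" using fib_T[OF False, of "[i]"] by auto
            then show False using Ext_pos[of xs "[i]"] False' by auto
          qed
          then show ?thesis using False w0[OF False'] by auto
        qed
      qed
    qed simp
    finally show ?thesis .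
  qed
  show ?thesis using A B eig i m_less by auto
qed

lemma uS_nz: assumes nz: "\<exists>i\<in>{1..n}. u i \<noteq> 0" shows "\<exists>i\<in>S. u i \<noteq> 0"
proof (rule ccontr)
  assume "\<not> (\<exists>i\<in>S. u i \<noteq> 0)"
  then have z: "\<forall>i\<in>S. u i = 0" by simp
  obtain t0 where t0: "t0 \<in> T" "u t0 \<noteq> 0" using nz z by force
  have chain: "\<exists>q. length q = Suc k \<and> set q \<subseteq> T \<and> distinct q \<and> edges q \<and> u (last q) \<noteq> 0" for k
  proof (induction k)
    case 0
    show ?case using t0 by (intro exI[of _ "[t0]"]) (auto simp: edges_def)
  next
    case (Suc k)
    then obtain q where q: "length q = Suc k" "set q \<subseteq> T" "distinct q" "edges q" "u (last q) \<noteq> 0" by blast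
    define t where "t = last q"
    have qn: "q \<noteq> []" using q by auto
    have tT: "t \<in> T" using q(2) last_in_set[OF qn] unfolding t_def by blast
    have tn: "t \<in> {1..n}" using tT m_less by auto
    have "(\<Sum>j\<in>{1..n}-{t}. w t j * u j) = (lam0 - w t t) * u t"
    proof -
      have "(\<Sum>j=1..n. w t j * u j) = w t t * u t + (\<Sum>j\<in>{1..n}-{t}. w t j * u j)"
        using tn by (simp add: sum.remove)
      then show ?thesis using eig tn by (simp add: algebra_simps)
    qed
    also have "\<dots> \<noteq> 0" using dT[OF tT] q(5) t_def by simp
    finally obtain j where j: "j \<in> {1..n}-{t}" "w t j * u j \<noteq> 0" by (meson sum.neutral)
    have e: "(t,j) \<in> E" using j w0 by fastforce
    have jT: "j \<in> T" using j z by force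
    have jq: "j \<notin> set q" using cyc[OF qn q(2,3,4)] e j t_def by auto
    show ?case
      using q qn jT jq e edges_snoc[OF qn q(4)] j t_def
      by (intro exI[of _ "q@[j]"]) auto
  qed
  obtain q where q: "length q = Suc m" "set q \<subseteq> T" "distinct q" using chain[of m] by blast
  have "length q = card (set q)" using q(3) by (simp add: distinct_card)
  also have "\<dots> \<le> card T" using q(2) by (intro card_mono) auto
  finally show False using q(1) by simp
qed

end

theorem mainTheorem1:
  fixes n m :: nat and E :: "(nat \<times> nat) set" and w :: "nat \<Rightarrow> nat \<Rightarrow> complex"
    and lam0 :: complex and u :: "nat \<Rightarrow> complex"
  assumes G: "wgraph n E w"
    and eig: "\<forall>i\<in>{1..n}. (\<Sum>j=1..n. w i j * u j) = lam0 * u i"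
    and nz: "\<exists>i\<in>{1..n}. u i \<noteq> 0"
    and S: "structural_set n E w lam0 {m+1..n}"
  shows "(\<exists>v :: nat \<Rightarrow> complex. (\<exists>i\<in>{m+1..n}. v i \<noteq> 0) \<and>
            (\<forall>i\<in>{m+1..n}. (\<Sum>j=m+1..n. reduced_entry E w {m+1..n} lam0 i j * v j) = lam0 * v i))
       \<and> (\<forall>i\<in>{m+1..n}. (\<Sum>j=m+1..n. reduced_entry E w {m+1..n} lam0 i j * u j) = lam0 * u i)"
  proof -
  interpret ctx n m E w lam0 u using G eig S by unfold_locales
  show ?thesis using red uS_nz[OF nz] by blast
qed

end
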